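(* Let $n\ge1$, $\theta\in\mathbb R$ and $\tilde g=[\tilde g_1^\top,\dots,\tilde g_n^\top]^\top\in\mathbb R^{3n}$. The following are equivalent: (a) $(\tilde g,\theta)$ is non-singular, i.e. the linear map $\mathcal F:\mathbb R^3\times\mathbb R^3\to\mathbb R^{3n}$, $\mathcal F(s,\tau)=A(\tilde g,\theta)[s^\top,\tau^\top]^\top$, is injective; (b) $\mathrm{rank}(A(\tilde g,\theta))=6$; (c) $\dim(\Pi(\tilde g,\theta))=6$; (d) each of the sets $\{\tilde p^x_{i,\theta}\}_{i=1}^n$, $\{\tilde p^y_{i,\theta}\}_{i=1}^n$, $\{\tilde\phi_i\}_{i=1}^n$ affinely spans $\mathbb R$.
   Context: $R(\theta)=\begin{bmatrix}\cos\theta&-\sin\theta\\ \sin\theta&\cos\theta\end{bmatrix}$, $\Theta=\begin{bmatrix}R(\theta)&0\\0&1\end{bmatrix}$. Each $\tilde g_i=[\tilde p_i^\top,\tilde\phi_i]^\top\in\mathbb R^3$, and $\tilde g_{i,\theta}:=\Theta^\top\tilde g_i=[\tilde p^x_{i,\theta},\tilde p^y_{i,\theta},\tilde\phi_i]^\top$. $A(\tilde g,\theta)\in\mathbb R^{3n\times6}$ is the matrix whose $i$-th block row is $[\Theta\,\mathrm{diag}(\tilde g_{i,\theta})\ \ I_3]$. The target state space is $\Pi(\tilde g,\theta)=\{g\in\mathbb R^{3n}: g_i=\tau+\Theta\,\mathrm{diag}(s)\,\Theta^\top\tilde g_i,\ i=1,\dots,n,\ s,\tau\in\mathbb R^3\}$,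 which equals the image of $A(\tilde g,\theta)$. A set $\{x_i\}$ of reals affinely spans $\mathbb R$ if $\{\sum a_ix_i:\sum a_i=1\}=\mathbb R$, equivalently it contains two distinct elements. *)

theory Defs
  imports "HOL-Analysis.Analysis"
begin

text \<open>The agent index set is an arbitrary finite type 'n (so n = CARD('n) \<ge> 1).
  A vector in R^{3n} is an element of real^('n \<times> 3): entry (i,k) is the k-th
  coordinate of the i-th block. The parameter space R^3 \<times> R^3 is real^(3+3),
  with Inl indexing s and Inr indexing tau.\<close>

definition Rot :: "real \<Rightarrow> real^2^2" where
  "Rot \<theta> = vector [vector [cos \<theta>, - sin \<theta>], vector [sin \<theta>, cos \<theta>]]"

text \<open>Theta = [[R(theta), 0], [0, 1]], written out entrywise.\<close>
definition Theta :: "real \<Rightarrow> real^3^3" where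
  "Theta \<theta> = vector [vector [cos \<theta>, - sin \<theta>, 0],
                      vector [sin \<theta>, cos \<theta>, 0],
                      vector [0, 0, 1]]"

definition diagm :: "real^3 \<Rightarrow> real^3^3" where
  "diagm v = (\<chi> a b. if a = b then v $ a else 0)"

text \<open>i-th block g_i \<in> R^3 of g \<in> R^{3n}.\<close>
definition blk :: "real^('n::finite \<times> 3) \<Rightarrow> 'n \<Rightarrow> real^3" where
  "blk g i = (\<chi> k. g $ (i, k))"

text \<open>tilde g_{i,theta} = Theta^T tilde g_i.\<close>
definition gtheta :: "real^('n::finite \<times> 3) \<Rightarrow> real \<Rightarrow> 'n \<Rightarrow> real^3" where
  "gtheta g \<theta> i = transpose (Theta \<theta>) *v blk g i"

text \<open>A(g,theta) \<in> R^{3n x 6}: block row i is [Theta diag(g_{i,theta})  I_3].\<close>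
definition Amat :: "real^('n::finite \<times> 3) \<Rightarrow> real \<Rightarrow> real^(3 + 3)^('n \<times> 3)" where
  "Amat g \<theta> = (\<chi> r c. case r of (i, k) \<Rightarrow>
      (case c of Inl j \<Rightarrow> (Theta \<theta> ** diagm (gtheta g \<theta> i)) $ k $ j
               | Inr j \<Rightarrow> (if k = j then 1 else 0)))"

text \<open>Stacking [s; tau] \<in> R^6.\<close>
definition stack :: "real^3 \<Rightarrow> real^3 \<Rightarrow> real^(3 + 3)" where
  "stack s \<tau> = (\<chi> c. case c of Inl j \<Rightarrow> s $ j | Inr j \<Rightarrow> \<tau> $ j)"

text \<open>Target state space Pi(g,theta).\<close>
definition Pi_space :: "real^('n::finite \<times> 3) \<Rightarrow> real \<Rightarrow> (real^('n \<times> 3)) set" where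
  "Pi_space gt \<theta> = {g. \<exists>s \<tau> :: real^3. \<forall>i. blk g i =
       \<tau> + (Theta \<theta> ** diagm s ** transpose (Theta \<theta>)) *v blk gt i}"

text \<open>A family x_i of reals affinely spans R.\<close>
definition affinely_spans :: "('n::finite \<Rightarrow> real) \<Rightarrow> bool" where
  "affinely_spans x \<longleftrightarrow>
     {\<Sum>i\<in>UNIV. a i * x i | a. (\<Sum>i\<in>UNIV. a i) = 1} = (UNIV :: real set)"

end

theory Submission
  imports Defs
begin
lemma Theta_e: "Theta t $ 1 $ 1 = cos t" "Theta t $ 1 $ 2 = - sin t" "Theta t $ 1 $ 3 = 0"
  "Theta t $ 2 $ 1 = sin t" "Theta t $ 2 $ 2 = cos t" "Theta t $ 2 $ 3 = 0"
  "Theta t $ 3 $ 1 = 0" "Theta t $ 3 $ 2 = 0" "Theta t $ 3 $ 3 = 1"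
  by (simp_all add: Theta_def)
lemma sum_plus: "(\<Sum>c\<in>(UNIV::('a::finite+'b::finite) set). f c) = (\<Sum>j\<in>UNIV. f (Inl j)) + (\<Sum>j\<in>UNIV. f (Inr j))"
  using sum.Plus[of "UNIV::'a set" "UNIV::'b set" f] by simp
lemma gth: "gtheta g t i $ 1 = cos t * g $ (i,1) + sin t * g $ (i,2)"
  "gtheta g t i $ 2 = - sin t * g $ (i,1) + cos t * g $ (i,2)"
  "gtheta g t i $ 3 = g $ (i,3)"
  by (simp_all add: gtheta_def matrix_vector_mult_def transpose_def blk_def sum_3 Theta_e)
lemma sd1: "(\<Sum>ka\<in>(UNIV::'a::finite set). f ka * (if ka = j then x ka else (0::real))) = f j * x j"
proof -
  have "\<And>ka. f ka * (if ka = j then x ka else (0::real)) = (if ka = j then f ka * x ka else 0)" by simp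
  then show ?thesis by simp
qed
lemma sd2: "(\<Sum>j\<in>(UNIV::'a::finite set). (if k = j then 1 else 0) * (x j::real)) = x k"
proof -
  have "\<And>j. (if k = j then 1 else 0) * (x j::real) = (if k = j then x j else 0)" by simp
  then show ?thesis by simp
qed
lemma amat_apply: "(Amat g t *v stack s \<tau>) $ (i,k) = (\<Sum>j\<in>UNIV. Theta t $ k $ j * gtheta g t i $ j * s $ j) + \<tau> $ k"
  by (simp add: matrix_vector_mult_def Amat_def stack_def sum_plus matrix_matrix_mult_def diagm_def sd1 sd2 mult.assoc)
lemma eqs: "(Amat g t *v stack s \<tau> = 0) \<longleftrightarrow> (\<forall>i.
   cos t * gtheta g t i $ 1 * s $ 1 - sin t * gtheta g t i $ 2 * s $ 2 + \<tau> $ 1 = 0 \<and>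
   sin t * gtheta g t i $ 1 * s $ 1 + cos t * gtheta g t i $ 2 * s $ 2 + \<tau> $ 2 = 0 \<and>
   gtheta g t i $ 3 * s $ 3 + \<tau> $ 3 = 0)"
  by (simp add: vec_eq_iff forall_3 amat_apply sum_3 Theta_e split_paired_all)

lemma aff_iff: "affinely_spans (x::'n::finite \<Rightarrow> real) \<longleftrightarrow> (\<exists>a b. x a \<noteq> x b)"
proof
  assume h: "affinely_spans x"
  show "\<exists>a b. x a \<noteq> x b"
  proof (rule ccontr)
    assume "\<not> (\<exists>a b. x a \<noteq> x b)"
    then have c: "\<And>i. x i = x undefined" by auto
    have "x undefined + 1 \<in> {\<Sum>i\<in>UNIV. a i * x i | a. (\<Sum>i\<in>UNIV. a i) = 1}"
      using h unfolding affinely_spans_def by simp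
    then obtain a where "x undefined + 1 = (\<Sum>i\<in>UNIV. a i * x i)" "(\<Sum>i\<in>UNIV. a i) = 1" by auto
    moreover have "(\<Sum>i\<in>UNIV. a i * x i) = (\<Sum>i\<in>UNIV. a i) * x undefined"
      by (subst c) (simp add: sum_distrib_right)
    ultimately show False by simp
  qed
next
  assume "\<exists>a b. x a \<noteq> x b"
  then obtain a b where ab: "x a \<noteq> x b" by auto
  then have anb: "a \<noteq> b" by auto
  show "affinely_spans x"
    unfolding affinely_spans_def
  proof (intro set_eqI iffI)
    fix t :: real
    define l where "l = (t - x b) / (x a - x b)"
    define w where "w = (\<lambda>i. if i = a then l else if i = b then 1 - l else 0)"
    have w1: "(\<Sum>i\<in>UNIV. w i) = 1"
    proof -
      have "(\<Sum>i\<in>UNIV. w i) = (\<Sum>i\<in>UNIV. (if i = a then l else 0) + (if i = b then 1 - l else 0))"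
        by (rule sum.cong) (auto simp: w_def anb)
      also have "\<dots> = 1" by (simp add: sum.distrib)
      finally show ?thesis .
    qed
    have w2: "(\<Sum>i\<in>UNIV. w i * x i) = t"
    proof -
      have "(\<Sum>i\<in>UNIV. w i * x i) = (\<Sum>i\<in>UNIV. (if i = a then l * x a else 0) + (if i = b then (1 - l) * x b else 0))"
        by (rule sum.cong) (auto simp: w_def anb)
      also have "\<dots> = l * x a + (1 - l) * x b" by (simp add: sum.distrib)
      also have "\<dots> = x b + l * (x a - x b)" by (simp add: algebra_simps)
      also have "\<dots> = t" using ab unfolding l_def by simp
      finally show ?thesis .
    qed
    show "t \<in> {\<Sum>i\<in>UNIV. a i * x i | a. (\<Sum>i\<in>UNIV. a i) = 1}"
      using w1 w2 by force
  qed auto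
qed

lemma stack_bij: "bij (\<lambda>(s, \<tau>). stack s \<tau>)"
proof (rule bij_betw_byWitness[where f'="\<lambda>v. ((\<chi> j. v $ Inl j), (\<chi> j. v $ Inr j))"])
  show "\<forall>a\<in>UNIV. (\<lambda>v. ((\<chi> j. v $ Inl j), (\<chi> j. v $ Inr j))) ((\<lambda>(s, \<tau>). stack s \<tau>) a) = a"
    by (auto simp: stack_def)
  show "\<forall>a'\<in>UNIV. (\<lambda>(s, \<tau>). stack s \<tau>) ((\<lambda>v. ((\<chi> j. v $ Inl j), (\<chi> j. v $ Inr j))) a') = a'"
    by (auto simp: stack_def vec_eq_iff split: sum.splits)
qed auto

lemma stack00: "stack 0 0 = 0"
  by (auto simp: stack_def vec_eq_iff split: sum.splits)

lemma inj_iff: "inj (\<lambda>(s, \<tau>). Amat gt \<theta> *v stack s \<tau>) \<longleftrightarrow> inj ((*v) (Amat gt \<theta>))"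
proof -
  have e: "(\<lambda>(s, \<tau>). Amat gt \<theta> *v stack s \<tau>) = (*v) (Amat gt \<theta>) \<circ> (\<lambda>(s, \<tau>). stack s \<tau>)"
    by auto
  show ?thesis unfolding e
  proof
    assume "inj ((*v) (Amat gt \<theta>) \<circ> (\<lambda>(s, \<tau>). stack s \<tau>))"
    then have "inj_on ((*v) (Amat gt \<theta>)) (range (\<lambda>(s, \<tau>). stack s \<tau>))"
      by (rule inj_on_imageI)
    then show "inj ((*v) (Amat gt \<theta>))" using stack_bij by (simp add: bij_def)
  next
    assume "inj ((*v) (Amat gt \<theta>))"
    then show "inj ((*v) (Amat gt \<theta>) \<circ> (\<lambda>(s, \<tau>). stack s \<tau>))"
      using stack_bij by (simp add: bij_def inj_compose)
  qed
qed
lemma ker_iff: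
  fixes g :: "real^('n::finite \<times> 3)"
  shows "(\<forall>s \<tau>. Amat g t *v stack s \<tau> = 0 \<longrightarrow> s = 0 \<and> \<tau> = 0) \<longleftrightarrow>
    (\<exists>a b. gtheta g t a $ 1 \<noteq> gtheta g t b $ 1) \<and> (\<exists>a b. gtheta g t a $ 2 \<noteq> gtheta g t b $ 2)
    \<and> (\<exists>a b. gtheta g t a $ 3 \<noteq> gtheta g t b $ 3)"
    (is "?L \<longleftrightarrow> ?X \<and> ?Y \<and> ?Z")
proof
  assume h: "?X \<and> ?Y \<and> ?Z"
  show ?L
  proof (intro allI impI)
    fix s \<tau> :: "real^3"
    let ?x = "\<lambda>i. gtheta g t i $ 1" and ?y = "\<lambda>i. gtheta g t i $ 2" and ?z = "\<lambda>i. gtheta g t i $ 3"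
    let ?c = "cos t" and ?n = "sin t"
    assume "Amat g t *v stack s \<tau> = 0"
    then have E: "\<And>i. ?c * ?x i * s $ 1 - ?n * ?y i * s $ 2 + \<tau> $ 1 = 0 \<and>
       ?n * ?x i * s $ 1 + ?c * ?y i * s $ 2 + \<tau> $ 2 = 0 \<and> ?z i * s $ 3 + \<tau> $ 3 = 0"
      unfolding eqs by blast
    have D: "(?x i - ?x j) * s $ 1 = 0 \<and> (?y i - ?y j) * s $ 2 = 0 \<and> (?z i - ?z j) * s $ 3 = 0" for i j
    proof -
      define du where "du = (?x i - ?x j) * s $ 1"
      define dv where "dv = (?y i - ?y j) * s $ 2"
      have 1: "?c * du - ?n * dv = 0" using E[of i] E[of j] unfolding du_def dv_def
        by (simp add: algebra_simps)
      have 2: "?n * du + ?c * dv = 0" using E[of i] E[of j] unfolding du_def dv_def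
        by (simp add: algebra_simps)
      have sc: "?n^2 + ?c^2 = 1" by simp
      have "?c * (?c * du - ?n * dv) + ?n * (?n * du + ?c * dv) = (?n^2 + ?c^2) * du"
        by algebra
      then have "du = 0" using 1 2 sc by simp
      moreover have "- ?n * (?c * du - ?n * dv) + ?c * (?n * du + ?c * dv) = (?n^2 + ?c^2) * dv"
        by algebra
      then have "dv = 0" using 1 2 sc by simp
      moreover have "(?z i - ?z j) * s $ 3 = 0"
      proof -
        have "?z i * s $ 3 = - \<tau> $ 3" "?z j * s $ 3 = - \<tau> $ 3" using E[of i] E[of j] by linarith+
        then show ?thesis by (simp add: left_diff_distrib)
      qed
      ultimately show ?thesis unfolding du_def dv_def by simp
    qed
    from h obtain a1 b1 a2 b2 a3 b3 where "?x a1 \<noteq> ?x b1" "?y a2 \<noteq> ?y b2" "?z a3 \<noteq> ?z b3" by blast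
    then have s0: "s $ 1 = 0" "s $ 2 = 0" "s $ 3 = 0" using D[of a1 b1] D[of a2 b2] D[of a3 b3] by auto
    then have "\<tau> $ 1 = 0" "\<tau> $ 2 = 0" "\<tau> $ 3 = 0" using E[of undefined] by auto
    with s0 show "s = 0 \<and> \<tau> = 0" by (simp add: vec_eq_iff forall_3)
  qed
next
  assume L: ?L
  let ?x = "\<lambda>i. gtheta g t i $ 1" and ?y = "\<lambda>i. gtheta g t i $ 2" and ?z = "\<lambda>i. gtheta g t i $ 3"
  let ?c = "cos t" and ?n = "sin t"
  have X: ?X
  proof (rule ccontr)
    assume "\<not> ?X"
    then obtain x0 where c: "\<And>i. ?x i = x0" by auto
    define s0 :: "real^3" where "s0 = vector [1, 0, 0]"
    define t0 :: "real^3" where "t0 = vector [- ?c * x0, - ?n * x0, 0]"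
    have sv: "s0 $ 1 = 1" "s0 $ 2 = 0" "s0 $ 3 = 0" by (simp_all add: s0_def)
    have tv: "t0 $ 1 = - ?c * x0" "t0 $ 2 = - ?n * x0" "t0 $ 3 = 0" by (simp_all add: t0_def)
    have "Amat g t *v stack s0 t0 = 0" unfolding eqs c sv tv by simp
    with L have "s0 = 0" by blast
    then show False using sv by simp
  qed
  have Y: ?Y
  proof (rule ccontr)
    assume "\<not> ?Y"
    then obtain y0 where c: "\<And>i. ?y i = y0" by auto
    define s0 :: "real^3" where "s0 = vector [0, 1, 0]"
    define t0 :: "real^3" where "t0 = vector [?n * y0, - ?c * y0, 0]"
    have sv: "s0 $ 1 = 0" "s0 $ 2 = 1" "s0 $ 3 = 0" by (simp_all add: s0_def)
    have tv: "t0 $ 1 = ?n * y0" "t0 $ 2 = - ?c * y0" "t0 $ 3 = 0" by (simp_all add: t0_def)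
    have "Amat g t *v stack s0 t0 = 0" unfolding eqs c sv tv by simp
    with L have "s0 = 0" by blast
    then show False using sv by simp
  qed
  have Z: ?Z
  proof (rule ccontr)
    assume "\<not> ?Z"
    then obtain z0 where c: "\<And>i. ?z i = z0" by auto
    define s0 :: "real^3" where "s0 = vector [0, 0, 1]"
    define t0 :: "real^3" where "t0 = vector [0, 0, - z0]"
    have sv: "s0 $ 1 = 0" "s0 $ 2 = 0" "s0 $ 3 = 1" by (simp_all add: s0_def)
    have tv: "t0 $ 1 = 0" "t0 $ 2 = 0" "t0 $ 3 = - z0" by (simp_all add: t0_def)
    have "Amat g t *v stack s0 t0 = 0" unfolding eqs c sv tv by simp
    with L have "s0 = 0" by blast
    then show False using sv by simp
  qed
  from X Y Z show "?X \<and> ?Y \<and> ?Z" by blast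
qed
lemma stack_eq0: "stack s \<tau> = 0 \<longleftrightarrow> s = 0 \<and> \<tau> = 0"
  by (auto simp: stack_def vec_eq_iff split: sum.splits)

lemma inj_ker: "inj ((*v) (Amat g t)) \<longleftrightarrow> (\<forall>s \<tau>. Amat g t *v stack s \<tau> = 0 \<longrightarrow> s = 0 \<and> \<tau> = 0)"
proof -
  have "inj ((*v) (Amat g t)) \<longleftrightarrow> (\<forall>v. Amat g t *v v = 0 \<longrightarrow> v = 0)"
    using linear_injective_0[OF matrix_vector_mul_linear] by blast
  also have "\<dots> \<longleftrightarrow> (\<forall>s \<tau>. Amat g t *v stack s \<tau> = 0 \<longrightarrow> stack s \<tau> = 0)"
    using stack_bij unfolding bij_def surj_def by (metis case_prod_beta prod.collapse)
  finally show ?thesis by (simp add: stack_eq0)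
qed

lemma Pi_range: "Pi_space gt \<theta> = range ((*v) (Amat gt \<theta>))"
proof -
  have blk_eq: "blk g i = \<tau> + (Theta \<theta> ** diagm s ** transpose (Theta \<theta>)) *v blk gt i \<longleftrightarrow>
      (\<forall>k. g $ (i,k) = (Amat gt \<theta> *v stack s \<tau>) $ (i,k))" for g i s \<tau>
  proof -
    have "(Theta \<theta> ** diagm s ** transpose (Theta \<theta>)) *v blk gt i = Theta \<theta> *v (diagm s *v gtheta gt \<theta> i)"
      by (simp only: gtheta_def matrix_vector_mul_assoc matrix_mul_assoc)
    moreover have "(Theta \<theta> *v (diagm s *v gtheta gt \<theta> i)) $ k = (\<Sum>j\<in>UNIV. Theta \<theta> $ k $ j * gtheta gt \<theta> i $ j * s $ j)" for k
    proof -
      have "\<And>j. (\<Sum>l\<in>UNIV. (if j = l then s $ j else 0) * gtheta gt \<theta> i $ l) = s $ j * gtheta gt \<theta> i $ j"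
      proof -
        fix j
        have "\<And>l. (if j = l then s $ j else 0) * gtheta gt \<theta> i $ l = (if j = l then s $ j * gtheta gt \<theta> i $ l else 0)" by simp
        then show "(\<Sum>l\<in>UNIV. (if j = l then s $ j else 0) * gtheta gt \<theta> i $ l) = s $ j * gtheta gt \<theta> i $ j" by simp
      qed
      then show ?thesis by (simp add: matrix_vector_mult_def diagm_def mult_ac)
    qed
    ultimately show ?thesis by (auto simp: blk_def vec_eq_iff amat_apply)
  qed
  have "g \<in> Pi_space gt \<theta> \<longleftrightarrow> (\<exists>s \<tau>. g = Amat gt \<theta> *v stack s \<tau>)" for g
    unfolding Pi_space_def mem_Collect_eq blk_eq by (simp add: vec_eq_iff split_paired_all)
  moreover have "(\<exists>s \<tau>. g = Amat gt \<theta> *v stack s \<tau>) \<longleftrightarrow> g \<in> range ((*v) (Amat gt \<theta>))" for g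
    using stack_bij unfolding bij_def surj_def by (metis (no_types, lifting) case_prod_beta prod.collapse rangeE rangeI)
  ultimately show ?thesis by blast
qed

theorem lemma3:
  fixes gt :: "real^('n::finite \<times> 3)" and \<theta> :: real
  shows "(inj (\<lambda>(s, \<tau>). Amat gt \<theta> *v stack s \<tau>)
          \<longleftrightarrow> rank (Amat gt \<theta>) = 6)
       \<and> (rank (Amat gt \<theta>) = 6 \<longleftrightarrow> dim (Pi_space gt \<theta>) = 6)
       \<and> (dim (Pi_space gt \<theta>) = 6 \<longleftrightarrow>
            (affinely_spans (\<lambda>i. gtheta gt \<theta> i $ 1)
             \<and> affinely_spans (\<lambda>i. gtheta gt \<theta> i $ 2)
             \<and> affinely_spans (\<lambda>i. gt $ (i, 3))))"
proof -
  have r: "rank (Amat gt \<theta>) = 6 \<longleftrightarrow> inj ((*v) (Amat gt \<theta>))"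
    using full_rank_injective[of "Amat gt \<theta>"] by simp
  have d: "dim (Pi_space gt \<theta>) = rank (Amat gt \<theta>)"
    by (simp add: Pi_range rank_dim_range)
  have z: "(\<lambda>i. gt $ (i, 3)) = (\<lambda>i. gtheta gt \<theta> i $ 3)" by (simp add: gth)
  have k: "inj ((*v) (Amat gt \<theta>)) \<longleftrightarrow> (affinely_spans (\<lambda>i. gtheta gt \<theta> i $ 1)
             \<and> affinely_spans (\<lambda>i. gtheta gt \<theta> i $ 2)
             \<and> affinely_spans (\<lambda>i. gtheta gt \<theta> i $ 3))"
    by (simp only: aff_iff inj_ker ker_iff)
  show ?thesis
    by (simp only: inj_iff r d z k)
qed
end
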